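(* For $1\le l\le m$, $$\pi_l\equiv\pi_m^{p^{m-l}}\pmod{\pi_m^{p^{m-l}+1}},$$ i.e. $\mathrm{ord}_p\big(\pi_l-\pi_m^{p^{m-l}}\big)\ge(p^{m-l}+1)\,\mathrm{ord}_p(\pi_m)$.
   Context: $p$ is a prime, $m\ge1$, $\mathrm{ord}_p(p)=1$, and $E(t)=\exp(\sum_{i\ge0}t^{p^i}/p^i)$ is the Artin–Hasse exponential. Fix a primitive $p^m$-th root of unity $\zeta\in\overline{\mathbb{Q}}_p$. For $l=1,\dots,m$, $\pi_l$ is the unique root in $\overline{\mathbb{Q}}_p$ of $\sum_{i\ge0}t^{p^i}/p^i=0$ with $\mathrm{ord}_p(\pi_l)=\frac1{p^{l-1}(p-1)}$ and $E(\pi_l)=\zeta^{p^{m-l}}$. *)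

theory Defs
  imports "HOL-Computational_Algebra.Computational_Algebra" "HOL-Library.Extended_Real"
begin

definition AH_log_fps :: "nat \<Rightarrow> rat fps" where
  "AH_log_fps p = Abs_fps (\<lambda>n. if (\<exists>i. n = p ^ i) then 1 / of_nat n else 0)"

definition artin_hasse_fps :: "nat \<Rightarrow> rat fps" where
  "artin_hasse_fps p = fps_compose (fps_exp 1) (AH_log_fps p)"

definition is_valuation :: "('a::field \<Rightarrow> ereal) \<Rightarrow> bool" where
  "is_valuation v \<longleftrightarrow>
     (\<forall>x. v x = \<infinity> \<longleftrightarrow> x = 0) \<and> (\<forall>x. v x \<noteq> -\<infinity>) \<and>
     (\<forall>x y. v (x * y) = v x + v y) \<and> (\<forall>x y. v (x + y) \<ge> min (v x) (v y))"

definition val_tendsto :: "('a::field \<Rightarrow> ereal) \<Rightarrow> (nat \<Rightarrow> 'a) \<Rightarrow> 'a \<Rightarrow> bool" where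
  "val_tendsto v s w \<longleftrightarrow> (\<forall>M::real. \<exists>N. \<forall>n\<ge>N. v (s n - w) \<ge> ereal M)"

definition val_sums :: "('a::field \<Rightarrow> ereal) \<Rightarrow> (nat \<Rightarrow> 'a) \<Rightarrow> 'a \<Rightarrow> bool" where
  "val_sums v f w \<longleftrightarrow> val_tendsto v (\<lambda>N. \<Sum>n<N. f n) w"

definition fps_val_eval :: "('a::field_char_0 \<Rightarrow> ereal) \<Rightarrow> rat fps \<Rightarrow> 'a \<Rightarrow> 'a \<Rightarrow> bool" where
  "fps_val_eval v F x w \<longleftrightarrow> val_sums v (\<lambda>n. of_rat (F $ n) * x ^ n) w"

definition primitive_root_of_unity :: "nat \<Rightarrow> 'a::field \<Rightarrow> bool" where
  "primitive_root_of_unity n z \<longleftrightarrow> z ^ n = 1 \<and> (\<forall>k. 0 < k \<and> k < n \<longrightarrow> z ^ k \<noteq> 1)"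

definition alg_closed_field :: "'a::field itself \<Rightarrow> bool" where
  "alg_closed_field _ \<longleftrightarrow> (\<forall>q::'a poly. degree q > 0 \<longrightarrow> (\<exists>x. poly q x = 0))"

end

theory Submission
  imports Defs "HOL-Number_Theory.Number_Theory"
begin

locale pval =
  fixes v :: "'a::field_char_0 \<Rightarrow> ereal" and p :: nat
  assumes val: "is_valuation v" and vp: "v (of_nat p) = 1" and pp: "prime p"
begin

lemma v0[simp]: "v 0 = \<infinity>" using val unfolding is_valuation_def by blast
lemma vinf_iff: "v x = \<infinity> \<longleftrightarrow> x = 0" using val unfolding is_valuation_def by blast
lemma vnm: "v x \<noteq> -\<infinity>" using val unfolding is_valuation_def by blast
lemma vmult: "v (x * y) = v x + v y" using val unfolding is_valuation_def by blast
lemma vadd: "v (x + y) \<ge> min (v x) (v y)" using val unfolding is_valuation_def by blast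

lemma v1[simp]: "v 1 = 0"
proof -
  have "v 1 = v 1 + v 1" using vmult[of 1 1] by simp
  moreover have "v 1 \<noteq> \<infinity>" using vinf_iff by simp
  moreover have "v 1 \<noteq> -\<infinity>" using vnm by simp
  ultimately show ?thesis by (cases "v 1") auto
qed

lemma vm1[simp]: "v (-1) = 0"
proof -
  have "v 1 = v (-1) + v (-1)" using vmult[of "-1" "-1"] by simp
  hence "v (-1) + v (-1) = 0" by simp
  moreover have "v (-1) \<noteq> -\<infinity>" using vnm by simp
  ultimately show ?thesis by (cases "v (-1)") auto
qed

lemma vuminus[simp]: "v (- x) = v x"
  using vmult[of "-1" x] by simp

lemma vdiff: "v (x - y) \<ge> min (v x) (v y)"
  using vadd[of x "-y"] by simp

lemma vge_add: "v x \<ge> ereal a \<Longrightarrow> v y \<ge> ereal a \<Longrightarrow> v (x + y) \<ge> ereal a"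
  using vadd[of x y] by (meson min.bounded_iff order_trans)
lemma vge_diff: "v x \<ge> ereal a \<Longrightarrow> v y \<ge> ereal a \<Longrightarrow> v (x - y) \<ge> ereal a"
  using vdiff[of x y] by (meson min.bounded_iff order_trans)

lemma vge_mult: "v x \<ge> ereal a \<Longrightarrow> v y \<ge> ereal b \<Longrightarrow> v (x * y) \<ge> ereal (a + b)"
  using vmult[of x y] by (metis add_mono plus_ereal.simps(1))

lemma vge_sum: "finite A \<Longrightarrow> (\<And>i. i \<in> A \<Longrightarrow> v (f i) \<ge> ereal a) \<Longrightarrow> v (sum f A) \<ge> ereal a"
  by (induction A rule: finite_induct) (auto intro!: vge_add)

lemma vge_power: "v x \<ge> ereal a \<Longrightarrow> v (x ^ n) \<ge> ereal (real n * a)"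
proof (induction n)
  case 0 then show ?case by simp
next
  case (Suc n)
  then have "v (x * x ^ n) \<ge> ereal (a + real n * a)" using vge_mult by blast
  then show ?case by (simp add: algebra_simps)
qed

lemma vge_prod: "finite A \<Longrightarrow> (\<And>i. i \<in> A \<Longrightarrow> v (f i) \<ge> 0) \<Longrightarrow> v (prod f A) \<ge> 0"
  by (induction A rule: finite_induct) (auto, metis add.right_neutral vge_mult zero_ereal_def)

lemma vnat: "v (of_nat n) \<ge> 0"
proof (induction n)
  case 0 then show ?case by simp
next
  case (Suc n)
  have "v (of_nat n + 1) \<ge> ereal 0" by (rule vge_add) (use Suc in \<open>auto simp: zero_ereal_def\<close>)
  then show ?case by (simp add: add.commute zero_ereal_def)
qed

lemma vint: "v (of_int z) \<ge> 0"
proof (cases "z \<ge> 0")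
  case True then show ?thesis using vnat[of "nat z"] by simp
next
  case False then have "of_int z = - (of_nat (nat (-z)) :: 'a)" by simp
  then show ?thesis using vnat[of "nat (-z)"] by simp
qed

lemma vcoprime: assumes "\<not> p dvd q" shows "v (of_nat q) = 0"
proof -
  have "coprime (int p) (int q)" using assms pp
    by (simp add: prime_imp_coprime_nat)
  then obtain a b where ab: "a * int p + b * int q = 1" using bezout_int[of "int p" "int q"] by auto
  hence "(of_int a * of_nat p + of_int b * of_nat q :: 'a) = 1"
    by (metis of_int_1 of_int_add of_int_mult of_int_of_nat_eq)
  hence "v 1 \<ge> min (v (of_int a * of_nat p)) (v (of_int b * of_nat q))" by (metis vadd)
  moreover have "v (of_int a * of_nat p) \<ge> ereal (0 + 1)" using vint[of a] vp
    by (intro vge_mult) (auto simp: zero_ereal_def)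
  ultimately have "\<not> v (of_int b * of_nat q) > 0"
  proof (intro notI)
    assume h1: "min (v (of_int a * of_nat p)) (v (of_int b * of_nat q)) \<le> v 1"
      and h2: "ereal (0 + 1) \<le> v (of_int a * of_nat p)" and h3: "v (of_int b * of_nat q) > 0"
    have "v (of_int a * of_nat p) > 0" using h2 by (rule less_le_trans[rotated]) simp
    hence "min (v (of_int a * of_nat p)) (v (of_int b * of_nat q)) > 0" using h3 by simp
    hence "0 < v 1" using h1 by (rule less_le_trans)
    thus False by simp
  qed
  hence "v (of_int b * of_nat q) \<le> 0" by simp
  hence "v (of_int b) + v (of_nat q) \<le> 0" by (simp add: vmult)
  moreover have "v (of_int b) \<ge> 0" "v (of_nat q) \<ge> 0" by (rule vint, rule vnat)
  ultimately have "v (of_nat q) \<le> 0"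
    using add_increasing[of "v (of_int b)" "v (of_nat q)" "v (of_nat q)"] by simp
  thus ?thesis using \<open>v (of_nat q) \<ge> 0\<close> by (rule antisym)
qed

lemma vpow: "v ((of_nat p :: 'a) ^ k) = ereal (real k)"
  by (induction k) (auto simp: vmult vp)

lemma vnat_mult: assumes "n > 0" shows "v (of_nat n) = ereal (real (multiplicity p n))"
proof -
  define k where "k = multiplicity p n"
  obtain y where y: "n = p ^ k * y" "\<not> p dvd y" 
  proof -
    have "n \<noteq> 0" "\<not> is_unit p" using assms pp by auto
    from multiplicity_decompose'[OF this] show ?thesis using that unfolding k_def by blast
  qed
  have "(of_nat n :: 'a) = of_nat p ^ k * of_nat y" using y(1) by simp
  hence "v (of_nat n) = v ((of_nat p :: 'a) ^ k) + v (of_nat y)" by (simp add: vmult)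
  also have "v (of_nat y) = 0" using vcoprime y(2) by simp
  finally show ?thesis by (simp add: vpow k_def)
qed

end

lemma mult_fact_rec:
  assumes pp: "prime (p::nat)"
  shows "multiplicity p (fact r) = r div p + multiplicity p (fact (r div p) :: nat)"
proof (induction r)
  case 0 then show ?case by simp
next
  case (Suc r)
  have pe: "prime_elem p" using pp by simp
  have "multiplicity p (fact (Suc r) :: nat) = multiplicity p (Suc r * fact r)" by simp
  also have "\<dots> = multiplicity p (Suc r) + multiplicity p (fact r :: nat)"
    by (rule prime_elem_multiplicity_mult_distrib[OF pe]) auto
  finally have eq: "multiplicity p (fact (Suc r) :: nat) = multiplicity p (Suc r) + multiplicity p (fact r :: nat)" .
  show ?case
  proof (cases "p dvd Suc r")
    case False
    then have "multiplicity p (Suc r) = 0" by (rule not_dvd_imp_multiplicity_0)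
    moreover have "Suc r div p = r div p" using False
      using div_Suc by presburger
    ultimately show ?thesis using eq Suc.IH by simp
  next
    case True
    then obtain s where s: "Suc r = p * s" by (elim dvdE)
    have p0: "p > 0" using pp prime_gt_0_nat by blast
    have s0: "s > 0" using s by (cases s) auto
    have d1: "Suc r div p = s" using s p0 by simp
    have d2: "r div p = s - 1"
    proof -
      have "p * s = p * (s-1) + p" using s0 by (cases s) auto
      hence "r = (p - 1) + p * (s - 1)" using s p0 by linarith
      thus ?thesis using p0 by (metis add_cancel_left_right diff_less div_less div_mult_self2
    less_numeral_extra(1) not_gr_zero)
    qed
    have m1: "multiplicity p (Suc r) = Suc (multiplicity p s)"
    proof -
      have "p \<noteq> Suc 0" using pp by (metis not_prime_1 One_nat_def)
      thus ?thesis using s multiplicity_times_same[of s p] s0 p0 by simp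
    qed
    have m2: "multiplicity p (fact s :: nat) = multiplicity p s + multiplicity p (fact (s - 1) :: nat)"
    proof -
      have "fact s = s * (fact (s - 1) :: nat)" using s0 by (simp add: fact_reduce)
      hence "multiplicity p (fact s :: nat) = multiplicity p (s * fact (s - 1) :: nat)" by simp
      also have "\<dots> = multiplicity p s + multiplicity p (fact (s-1) :: nat)"
        by (rule prime_elem_multiplicity_mult_distrib[OF pe]) (use s0 in auto)
      finally show ?thesis .
    qed
    show ?thesis using eq Suc.IH d1 d2 m1 m2 s0 by simp
  qed
qed

lemma mult_fact_le:
  assumes pp: "prime (p::nat)" and "r \<ge> 1"
  shows "multiplicity p (fact r :: nat) \<le> r - 1"
  using assms(2)
proof (induction r rule: less_induct)
  case (less r)
  have p2: "p \<ge> 2" using pp prime_ge_2_nat by blast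
  define q where "q = r div p"
  have qr: "q < r" using less.prems p2 unfolding q_def by simp
  have pq: "p * q \<le> r" unfolding q_def by simp
  show ?case
  proof (cases "q = 0")
    case True then show ?thesis using mult_fact_rec[OF pp, of r] unfolding q_def by simp
  next
    case False
    have "multiplicity p (fact q :: nat) \<le> q - 1" using less.IH[OF qr] False by simp
    moreover have "2 * q \<le> r" using pq p2 by (meson dual_order.trans mult_le_mono1)
    ultimately show ?thesis using mult_fact_rec[OF pp, of r] False unfolding q_def[symmetric] by simp
  qed
qed

lemma fermat_nat: assumes "prime (p::nat)" shows "[n ^ p = n] (mod p)"
proof (cases "p dvd n")
  case True
  have "p > 0" using assms prime_gt_0_nat by blast
  hence "p dvd n ^ p" using dvd_trans[OF True dvd_power[of p n]] by auto
  thus ?thesis using True by (simp add: cong_def dvd_imp_mod_0)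
next
  case False
  have "[n ^ (p - 1) = 1] (mod p)" by (rule fermat_theorem[OF assms False])
  hence "[n * n ^ (p - 1) = n * 1] (mod p)" by (rule cong_scalar_left)
  moreover have "n * n ^ (p - 1) = n ^ p" using assms prime_gt_0_nat
    by (metis Suc_diff_1 power_Suc)
  ultimately show ?thesis by simp
qed

lemma fermat_int: assumes "prime (p::nat)" shows "[a ^ p = a] (mod int p)"
proof -
  define n where "n = nat (a mod int p)"
  have p0: "int p > 0" using assms prime_gt_0_nat by simp
  have an: "a mod int p = int n" unfolding n_def using p0 by simp
  have c1: "[a = int n] (mod int p)" using an by (metis cong_def mod_mod_trivial)
  have "[int (n ^ p) = int n] (mod int p)" using fermat_nat[OF assms, of n] by (simp only: cong_int_iff)
  hence c2: "[int n ^ p = int n] (mod int p)" by simp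
  have "[a ^ p = int n ^ p] (mod int p)" using c1 by (rule cong_pow)
  from cong_trans[OF this c2] show ?thesis using cong_sym[OF c1] by (rule cong_trans)
qed

context pval begin

lemma vint_coprime: assumes "\<not> int p dvd a" shows "v (of_int a) = 0"
proof (cases "a \<ge> 0")
  case True
  hence "\<not> p dvd nat a" using assms by (metis int_dvd_int_iff nat_0_le)
  thus ?thesis using vcoprime True by (metis of_int_of_nat_eq nat_0_le)
next
  case False
  hence "\<not> p dvd nat (-a)" using assms
    by (metis dvd_minus_iff int_dvd_int_iff nat_0_le neg_0_le_iff_le nle_le)
  moreover have "(of_int a :: 'a) = - of_nat (nat (-a))" using False by simp
  ultimately show ?thesis using vcoprime by simp
qed

lemma vint_dvd: assumes "int p dvd a" shows "v (of_int a) \<ge> 1"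
proof -
  obtain k where k: "a = int p * k" using assms by (elim dvdE)
  have "(of_int a :: 'a) = of_nat p * of_int k" using k by simp
  hence "v (of_int a) = 1 + v (of_int k)" using vp by (simp add: vmult)
  thus ?thesis using vint[of k] by (metis add_increasing2 order_refl one_ereal_def zero_ereal_def)
qed

lemma vrat_frac: 
  assumes "quotient_of r = (a, b)"
  shows "of_rat r * of_int b = (of_int a :: 'a)" "b > 0" "coprime a b"
proof -
  have "r = of_int a / of_int b" using assms quotient_of_div by blast
  moreover show "b > 0" using assms quotient_of_denom_pos by blast
  moreover show "coprime a b" using assms quotient_of_coprime by blast
  ultimately show "of_rat r * of_int b = (of_int a :: 'a)"
    by (simp add: of_rat_divide)
qed

lemma vrat_denom:
  assumes "v (of_rat r) \<ge> 0" "quotient_of r = (a, b)"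
  shows "\<not> int p dvd b"
proof
  assume pb: "int p dvd b"
  have cp: "coprime a b" and eq: "of_rat r * of_int b = (of_int a :: 'a)" using vrat_frac[OF assms(2)] by auto
  have "\<not> int p dvd a"
  proof
    assume "int p dvd a"
    with pb have "int p dvd gcd a b" by simp
    with cp have "int p dvd 1" by simp
    thus False using pp by (simp add: prime_gt_1_nat)
  qed
  hence "v (of_int a :: 'a) = 0" by (rule vint_coprime)
  moreover have "v (of_rat r * of_int b :: 'a) \<ge> 0 + 1"
    by (rule add_mono[OF assms(1) vint_dvd[OF pb], folded vmult])
  ultimately show False using eq by simp
qed

lemma vrat_fermat:
  assumes "v (of_rat r) \<ge> 0"
  shows "v (of_rat (r ^ p - r)) \<ge> 1"
proof -
  obtain a b where ab: "quotient_of r = (a, b)" by (cases "quotient_of r") auto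
  have b0: "b > 0" and eq: "of_rat r * of_int b = (of_int a :: 'a)" using vrat_frac[OF ab] by auto
  have nb: "\<not> int p dvd b" by (rule vrat_denom[OF assms ab])
  have p1: "p \<ge> 1" using pp prime_gt_0_nat by (simp add: Suc_leI)
  have "[a ^ p = a] (mod int p)" by (rule fermat_int[OF pp])
  moreover have "[b ^ p = b] (mod int p)" by (rule fermat_int[OF pp])
  hence "[a * b ^ p = a * b] (mod int p)" by (rule cong_scalar_left)
  ultimately have "[a ^ p * b = a * b ^ p] (mod int p)"
    by (metis cong_scalar_right cong_sym cong_trans mult.commute)
  hence dv: "int p dvd (a ^ p * b - a * b ^ p)" by (simp add: cong_iff_dvd_diff)
  have "(of_rat (r ^ p - r) :: 'a) * of_int (b ^ (p + 1)) = of_int (a ^ p * b - a * b ^ p)"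
  proof -
    have "(of_rat (r ^ p - r) :: 'a) * of_int (b ^ (p + 1))
        = (of_rat r * of_int b) ^ p * of_int b - (of_rat r * of_int b) * of_int b ^ p"
      by (simp add: of_rat_diff of_rat_power algebra_simps power_mult_distrib)
    also have "\<dots> = of_int (a ^ p * b - a * b ^ p)" using eq by simp
    finally show ?thesis .
  qed
  hence "v (of_rat (r ^ p - r) :: 'a) + v (of_int (b ^ (p + 1)) :: 'a) = v (of_int (a ^ p * b - a * b ^ p) :: 'a)"
    by (metis vmult)
  moreover have "v (of_int (b ^ (p + 1)) :: 'a) = 0"
  proof (rule vint_coprime)
    have ip: "prime (int p)" using pp by simp
    show "\<not> int p dvd b ^ (p + 1)"
    proof
      assume "int p dvd b ^ (p + 1)"
      hence "int p dvd b" using prime_dvd_power[OF ip] by blast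
      with nb show False by simp
    qed
  qed
  ultimately show ?thesis using vint_dvd[OF dv] by simp
qed

end

lemma compose_Xpow_nth:
  fixes f :: "'a::idom fps"
  assumes k: "k > 0"
  shows "(f oo fps_X ^ k) $ n = (if k dvd n then f $ (n div k) else 0)"
proof -
  have "(f oo fps_X ^ k) $ n = (\<Sum>i=0..n. f $ i * ((fps_X ^ k) ^ i $ n))" by (rule fps_compose_nth)
  also have "\<dots> = (\<Sum>i=0..n. if i = n div k \<and> k dvd n then f $ i else 0)"
  proof (rule sum.cong[OF refl])
    fix i assume "i \<in> {0..n}"
    have "((fps_X :: 'a fps) ^ k) ^ i $ n = (if n = k * i then 1 else 0)"
      by (simp add: power_mult[symmetric] fps_X_power_nth)
    moreover have "(n = k * i) \<longleftrightarrow> (i = n div k \<and> k dvd n)" using k by auto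
    ultimately show "f $ i * ((fps_X ^ k) ^ i $ n) = (if i = n div k \<and> k dvd n then f $ i else 0)"
      by simp
  qed
  also have "\<dots> = (if k dvd n then f $ (n div k) else 0)"
    by (cases "k dvd n") (auto simp: sum.delta')
  finally show ?thesis .
qed

lemma AH_log_0: "prime p \<Longrightarrow> AH_log_fps p $ 0 = 0"
  unfolding AH_log_fps_def by simp

lemma ell_nth: "fps_deriv (AH_log_fps p) $ n = (if \<exists>i. Suc n = p ^ i then 1 else 0)"
  unfolding AH_log_fps_def by (auto simp del: of_nat_Suc)

lemma AH_0: "prime p \<Longrightarrow> artin_hasse_fps p $ 0 = 1"
  unfolding artin_hasse_fps_def by simp

lemma AH_deriv: "prime p \<Longrightarrow> fps_deriv (artin_hasse_fps p) = artin_hasse_fps p * fps_deriv (AH_log_fps p)"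
  unfolding artin_hasse_fps_def
  by (simp add: fps_compose_deriv AH_log_0)

lemma ode_unique:
  fixes F G C :: "'a::field_char_0 fps"
  assumes "fps_deriv F = F * C" "fps_deriv G = G * C" "F $ 0 = G $ 0"
  shows "F = G"
proof -
  have "F $ n = G $ n" for n
  proof (induction n rule: less_induct)
    case (less n)
    show ?case
    proof (cases n)
      case 0 then show ?thesis using assms(3) by simp
    next
      case (Suc m)
      have "of_nat (m + 1) * F $ (m + 1) = (F * C) $ m" using arg_cong[OF assms(1), of "\<lambda>x. x $ m"] by simp
      also have "\<dots> = (G * C) $ m" unfolding fps_mult_nth
        by (rule sum.cong[OF refl]) (use less Suc in auto)
      also have "\<dots> = of_nat (m + 1) * G $ (m + 1)" using arg_cong[OF assms(2), of "\<lambda>x. x $ m"] by simp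
      finally show ?thesis using Suc by (simp del: of_nat_Suc of_nat_add)
    qed
  qed
  thus ?thesis by (simp add: fps_eq_iff)
qed

lemma pow_shift:
  assumes pp: "prime (p::nat)"
  shows "(p dvd t \<and> (\<exists>i. Suc (t div p) = p ^ i)) \<longleftrightarrow> (\<exists>i. t + p = p ^ i)"
proof
  assume "p dvd t \<and> (\<exists>i. Suc (t div p) = p ^ i)"
  then obtain i s where ts: "t = p * s" and i: "Suc s = p ^ i" using pp by (auto elim!: dvdE)
  have "t + p = p * Suc s" using ts by simp
  also have "\<dots> = p ^ Suc i" using i by simp
  finally show "\<exists>i. t + p = p ^ i" by blast
next
  assume "\<exists>i. t + p = p ^ i"
  then obtain i where i: "t + p = p ^ i" by blast
  have p1: "p > 1" using pp prime_gt_1_nat by blast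
  have "i \<noteq> 0" using i p1 by (cases i) auto
  then obtain j where j: "i = Suc j" by (cases i) auto
  hence tp: "t + p = p * p ^ j" using i by simp
  hence "p dvd t" by (metis dvd_add_times_triv_right_iff dvd_triv_left mult.commute mult_1 )
  then obtain s where s: "t = p * s" by (elim dvdE)
  have eq: "p * Suc s = p * p ^ j" using tp s by (simp only: mult_Suc_right add.commute)
  have pz: "p \<noteq> 0" using p1 by simp
  have "Suc s = p ^ j" using eq mult_left_cancel[OF pz] by blast
  moreover have "t div p = s" using s p1 by simp
  ultimately show "p dvd t \<and> (\<exists>i. Suc (t div p) = p ^ i)" using s by auto
qed

lemma key_ell:
  assumes pp: "prime p"
  shows "(fps_deriv (AH_log_fps p) oo fps_X ^ p) * fps_X ^ (p - 1) = fps_deriv (AH_log_fps p) - 1"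
proof (rule fps_ext)
  fix n
  have p1: "p > 1" using pp prime_gt_1_nat by blast
  show "((fps_deriv (AH_log_fps p) oo fps_X ^ p) * fps_X ^ (p - 1)) $ n = (fps_deriv (AH_log_fps p) - 1) $ n"
  proof (cases "n < p - 1")
    case True
    have "\<not> (\<exists>i. Suc n = p ^ i) \<or> n = 0"
    proof (cases "n = 0")
      case False
      { fix i assume i: "Suc n = p ^ i"
        have "i \<noteq> 0" using i False by (cases i) auto
        hence "p ^ i \<ge> p ^ 1" using p1 by (intro power_increasing) auto
        hence False using i True by simp }
      thus ?thesis by blast
    qed simp
    moreover have "\<exists>i. Suc 0 = p ^ i" by (rule exI[of _ 0]) simp
    ultimately show ?thesis using True by (auto simp: fps_X_power_mult_right_nth ell_nth simp del: fps_deriv_nth)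
  next
    case False
    define t where "t = n - (p - 1)"
    have tn: "Suc n = t + p" using False p1 unfolding t_def by simp
    have n0: "n \<noteq> 0" using False p1 by simp
    have "((fps_deriv (AH_log_fps p) oo fps_X ^ p) * fps_X ^ (p - 1)) $ n
        = (if p dvd t then (if \<exists>i. Suc (t div p) = p ^ i then 1 else 0) else 0)"
      using False p1 by (simp add: fps_X_power_mult_right_nth compose_Xpow_nth ell_nth t_def del: fps_deriv_nth)
    also have "\<dots> = (if \<exists>i. t + p = p ^ i then 1 else 0)" using pow_shift[OF pp, of t] by auto
    also have "\<dots> = (fps_deriv (AH_log_fps p) - 1) $ n" using tn n0 by (simp add: ell_nth del: fps_deriv_nth)
    finally show ?thesis .
  qed
qed

lemma dwork_identity:
  assumes pp: "prime p"
  shows "artin_hasse_fps p oo fps_X ^ p = artin_hasse_fps p ^ p * fps_exp (- of_nat p)"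
proof -
  define A where "A = artin_hasse_fps p"
  define l where "l = fps_deriv (AH_log_fps p)"
  define C where "C = fps_const (of_nat p :: rat) * (l - 1)"
  have p1: "p > 1" using pp prime_gt_1_nat by blast
  have X0: "(fps_X ^ p :: rat fps) $ 0 = 0" using p1 by simp
  have dA: "fps_deriv A = A * l" unfolding A_def l_def by (rule AH_deriv[OF pp])
  have dXp: "fps_deriv (fps_X ^ p :: rat fps) = fps_const (of_nat p) * fps_X ^ (p - 1)"
    by (simp add: fps_deriv_power)
  have "fps_deriv (A oo fps_X ^ p) = (fps_deriv A oo fps_X ^ p) * fps_deriv (fps_X ^ p)"
    by (rule fps_compose_deriv[OF X0])
  also have "\<dots> = (A oo fps_X ^ p) * ((l oo fps_X ^ p) * fps_X ^ (p - 1)) * fps_const (of_nat p)"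
    unfolding dA dXp fps_compose_mult_distrib[OF X0] by (simp add: algebra_simps)
  also have "\<dots> = (A oo fps_X ^ p) * C"
    unfolding l_def key_ell[OF pp] C_def l_def by (simp add: algebra_simps)
  finally have d1: "fps_deriv (A oo fps_X ^ p) = (A oo fps_X ^ p) * C" .
  obtain q where pq: "p = Suc q" using p1 by (cases p) auto
  have dAp: "fps_deriv (A ^ p) = fps_const (of_nat p) * l * A ^ p"
  proof -
    have "fps_deriv (A ^ p) = fps_const (of_nat p) * (A * l) * A ^ (p - 1)"
      by (simp only: fps_deriv_power dA)
    also have "\<dots> = fps_const (of_nat p) * l * (A * A ^ (p - 1))" by (simp only: mult_ac)
    also have "A * A ^ (p - 1) = A ^ p" using pq by simp
    finally show ?thesis .
  qed
  have de: "fps_deriv (fps_exp (- of_nat p) :: rat fps) = - fps_const (of_nat p) * fps_exp (- of_nat p)"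
    by simp
  have "fps_deriv (A ^ p * fps_exp (- of_nat p)) = fps_deriv (A ^ p) * fps_exp (- of_nat p) + A ^ p * fps_deriv (fps_exp (- of_nat p))"
    unfolding fps_deriv_mult by (rule add.commute)
  also have "\<dots> = fps_const (of_nat p) * l * A ^ p * fps_exp (- of_nat p) + A ^ p * (- fps_const (of_nat p) * fps_exp (- of_nat p))"
    by (simp only: dAp de)
  also have "\<dots> = (A ^ p * fps_exp (- of_nat p)) * C"
    unfolding C_def by (simp add: algebra_simps fps_const_neg[symmetric] del: fps_const_neg)
  finally have d2: "fps_deriv (A ^ p * fps_exp (- of_nat p)) = (A ^ p * fps_exp (- of_nat p)) * C" .
  have "(A oo fps_X ^ p) $ 0 = (A ^ p * fps_exp (- of_nat p)) $ 0"
    using AH_0[OF pp] unfolding A_def by (simp add: fps_power_zeroth)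
  from ode_unique[OF d1 d2 this] show ?thesis unfolding A_def .
qed

definition trunc :: "nat \<Rightarrow> 'b::zero fps \<Rightarrow> 'b fps" where
  "trunc N f = Abs_fps (\<lambda>j. if j < N then f $ j else 0)"

lemma trunc_nth: "trunc N f $ j = (if j < N then f $ j else 0)"
  unfolding trunc_def by simp

lemma trunc_Suc: "trunc (Suc N) (f :: 'b::comm_ring_1 fps) = trunc N f + fps_const (f $ N) * fps_X ^ N"
  by (rule fps_ext) (auto simp: trunc_nth fps_X_power_nth less_Suc_eq)

lemma fps_diff_factor:
  fixes f g :: "'b::comm_ring_1 fps"
  shows "f ^ k - g ^ k = (f - g) * (\<Sum>i<k. f ^ i * g ^ (k - Suc i))"
  by (simp add: power_diff_sumr2 mult_ac)

lemma mult_nth_low: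
  fixes h S :: "'b::comm_ring_1 fps"
  assumes "\<And>j. j < n \<Longrightarrow> h $ j = 0"
  shows "(h * S) $ n = h $ n * S $ 0" and "\<And>j. j < n \<Longrightarrow> (h * S) $ j = 0"
proof -
  have "(h * S) $ n = (\<Sum>i=0..n. h $ i * S $ (n - i))" by (rule fps_mult_nth)
  also have "\<dots> = (\<Sum>i=0..n. if i = n then h $ n * S $ 0 else 0)"
    by (rule sum.cong[OF refl]) (auto simp: assms)
  also have "\<dots> = h $ n * S $ 0" by (simp add: sum.delta')
  finally show "(h * S) $ n = h $ n * S $ 0" .
  fix j assume j: "j < n"
  have "(h * S) $ j = (\<Sum>i=0..j. h $ i * S $ (j - i))" by (rule fps_mult_nth)
  also have "\<dots> = 0" by (rule sum.neutral) (use j assms in auto)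
  finally show "(h * S) $ j = 0" .
qed

lemma power_low_eq:
  fixes f g :: "'b::comm_ring_1 fps"
  assumes "\<And>j. j < n \<Longrightarrow> f $ j = g $ j" "j < n"
  shows "(f ^ k) $ j = (g ^ k) $ j"
proof -
  have "(f ^ k - g ^ k) $ j = 0" unfolding fps_diff_factor
    by (rule mult_nth_low(2)[OF _ assms(2)]) (use assms(1) in simp)
  thus ?thesis by simp
qed

lemma power_top_diff:
  fixes f g :: "'b::comm_ring_1 fps"
  assumes "\<And>j. j < n \<Longrightarrow> f $ j = g $ j" "f $ 0 = 1" "g $ 0 = 1"
  shows "(f ^ k) $ n - (g ^ k) $ n = of_nat k * (f $ n - g $ n)"
proof -
  have "(f ^ k - g ^ k) $ n = (f - g) $ n * (\<Sum>i<k. f ^ i * g ^ (k - Suc i)) $ 0" unfolding fps_diff_factor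
    by (rule mult_nth_low(1)) (use assms(1) in simp)
  also have "(\<Sum>i<k. f ^ i * g ^ (k - Suc i)) $ 0 = of_nat k"
    by (simp add: fps_sum_nth fps_power_zeroth assms(2,3))
  finally show ?thesis by (simp add: mult.commute)
qed

context pval begin

abbreviation vr :: "rat \<Rightarrow> ereal" where "vr r \<equiv> v (of_rat r :: 'a)"

definition intg :: "rat fps \<Rightarrow> bool" where "intg f \<longleftrightarrow> (\<forall>n. vr (f $ n) \<ge> 0)"
definition pcong :: "rat fps \<Rightarrow> rat fps \<Rightarrow> bool" where "pcong f g \<longleftrightarrow> (\<forall>n. vr ((f - g) $ n) \<ge> 1)"

lemma vr_add: "vr x \<ge> ereal a \<Longrightarrow> vr y \<ge> ereal a \<Longrightarrow> vr (x + y) \<ge> ereal a"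
  by (simp add: of_rat_add vge_add)
lemma vr_diff: "vr x \<ge> ereal a \<Longrightarrow> vr y \<ge> ereal a \<Longrightarrow> vr (x - y) \<ge> ereal a"
  by (simp add: of_rat_diff vge_diff)
lemma vr_mult: "vr x \<ge> ereal a \<Longrightarrow> vr y \<ge> ereal b \<Longrightarrow> vr (x * y) \<ge> ereal (a + b)"
  by (simp add: of_rat_mult vge_mult)
lemma vr_sum: "finite A \<Longrightarrow> (\<And>i. i \<in> A \<Longrightarrow> vr (f i) \<ge> ereal a) \<Longrightarrow> vr (sum f A) \<ge> ereal a"
  by (induction A rule: finite_induct) (auto intro!: vr_add)
lemma vr_nat: "vr (of_nat n) \<ge> 0"
  using vnat[of n] by simp
lemma vr_uminus[simp]: "vr (- x) = vr x"
  by (simp add: of_rat_minus)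

lemma vr_mult0: "vr x \<ge> 0 \<Longrightarrow> vr y \<ge> 0 \<Longrightarrow> vr (x * y) \<ge> 0"
  using vr_mult[where a=0 and b=0] by (simp add: zero_ereal_def)
lemma vr_mult1: "vr x \<ge> 1 \<Longrightarrow> vr y \<ge> 0 \<Longrightarrow> vr (x * y) \<ge> 1"
  using vr_mult[where a=1 and b=0] by (simp add: zero_ereal_def one_ereal_def)

lemma intg_add: "intg f \<Longrightarrow> intg g \<Longrightarrow> intg (f + g)"
  unfolding intg_def using vr_add[where a=0] by (simp add: zero_ereal_def)
lemma intg_mult: assumes "intg f" "intg g" shows "intg (f * g)"
  unfolding intg_def fps_mult_nth
proof
  fix n
  have "vr (\<Sum>i = 0..n. f $ i * g $ (n - i)) \<ge> ereal 0"
    by (rule vr_sum) (use assms vr_mult0 in \<open>auto simp: intg_def zero_ereal_def\<close>)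
  thus "vr (\<Sum>i = 0..n. f $ i * g $ (n - i)) \<ge> 0" by (simp add: zero_ereal_def)
qed
lemma intg_one: "intg 1"
  unfolding intg_def by (simp add: fps_one_nth)
lemma intg_power: "intg f \<Longrightarrow> intg (f ^ k)"
  by (induction k) (auto intro: intg_mult intg_one)
lemma intg_const: "vr c \<ge> 0 \<Longrightarrow> intg (fps_const c)"
  unfolding intg_def by (simp add: fps_nth_fps_const)
lemma intg_Xpow: "intg (fps_X ^ k)"
  unfolding intg_def by (simp add: fps_X_power_nth)

lemma pcong_refl: "pcong f f"
  unfolding pcong_def by simp
lemma pcong_sym: "pcong f g \<Longrightarrow> pcong g f"
  unfolding pcong_def by (metis minus_diff_eq fps_neg_nth vr_uminus)
lemma pcong_add: assumes "pcong f g" "pcong f' g'" shows "pcong (f + f') (g + g')"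
  unfolding pcong_def
proof
  fix n
  have "(f + f' - (g + g')) $ n = (f - g) $ n + (f' - g') $ n" by simp
  moreover have "vr ((f - g) $ n + (f' - g') $ n) \<ge> ereal 1"
    by (rule vr_add) (use assms in \<open>auto simp: pcong_def one_ereal_def\<close>)
  ultimately show "vr ((f + f' - (g + g')) $ n) \<ge> 1" by (simp add: one_ereal_def algebra_simps)
qed
lemma pcong_trans: "pcong f g \<Longrightarrow> pcong g h \<Longrightarrow> pcong f h"
proof -
  assume "pcong f g" "pcong g h"
  hence "pcong (f + g) (g + h)" by (rule pcong_add)
  thus "pcong f h" unfolding pcong_def by simp
qed

end

context pval begin

lemma vr_zero[simp]: "vr 0 = \<infinity>" by simp

lemma pcong_mult_right: assumes "pcong f g" "intg h" shows "pcong (f * h) (g * h)"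
  unfolding pcong_def
proof
  fix n
  have "(f * h - g * h) = (f - g) * h" by (simp add: algebra_simps)
  hence "(f * h - g * h) $ n = (\<Sum>i = 0..n. (f - g) $ i * h $ (n - i))" by (simp add: fps_mult_nth)
  moreover have "vr (\<Sum>i = 0..n. (f - g) $ i * h $ (n - i)) \<ge> ereal 1"
    by (rule vr_sum) (use assms vr_mult1 in \<open>auto simp: pcong_def intg_def one_ereal_def\<close>)
  ultimately show "vr ((f * h - g * h) $ n) \<ge> 1" by (simp add: one_ereal_def)
qed

lemma vr_p_mult: "vr (of_nat p * x) = 1 + vr x"
  by (simp add: of_rat_mult vmult vp)

lemma vr_choose: assumes "0 < k" "k < p" shows "vr (of_nat (p choose k)) \<ge> 1"
proof -
  have "p dvd (p choose k)" using dvd_choose_prime[of k p] assms pp by auto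
  then obtain m where m: "p choose k = p * m" by (elim dvdE)
  have "vr (of_nat (p choose k)) = 1 + vr (of_nat m)" unfolding m by (simp only: of_nat_mult vr_p_mult)
  thus ?thesis using vr_nat[of m] by (metis add_increasing2 order_refl)
qed

lemma freshman: assumes f: "intg f" and g: "intg g" shows "pcong ((f + g) ^ p) (f ^ p + g ^ p)"
proof -
  define T where "T k = of_nat (p choose k) * f ^ k * g ^ (p - k)" for k
  have p1: "p \<ge> 1" using pp prime_gt_0_nat by (simp add: Suc_leI)
  have "(f + g) ^ p = (\<Sum>k\<le>p. T k)" unfolding T_def by (rule binomial_ring)
  also have "{..p} = insert p (insert 0 {1..<p})" using p1 by auto
  also have "(\<Sum>k\<in>insert p (insert 0 {1..<p}). T k) = T p + (T 0 + (\<Sum>k\<in>{1..<p}. T k))"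
    using p1 by (simp add: sum.insert)
  also have "T p = f ^ p" by (simp add: T_def)
  also have "T 0 = g ^ p" by (simp add: T_def)
  finally have eq: "(f + g) ^ p - (f ^ p + g ^ p) = (\<Sum>k\<in>{1..<p}. T k)" by simp
  show ?thesis unfolding pcong_def eq
  proof
    fix n
    have "(\<Sum>k\<in>{1..<p}. T k) $ n = (\<Sum>k\<in>{1..<p}. of_nat (p choose k) * (f ^ k * g ^ (p - k)) $ n)"
      by (simp add: fps_sum_nth T_def fps_of_nat mult.assoc)
    moreover have "vr (\<Sum>k\<in>{1..<p}. of_nat (p choose k) * (f ^ k * g ^ (p - k)) $ n) \<ge> ereal 1"
    proof (rule vr_sum)
      fix k assume k: "k \<in> {1..<p}"
      have "intg (f ^ k * g ^ (p - k))" using f g by (intro intg_mult intg_power)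
      hence "vr ((f ^ k * g ^ (p - k)) $ n) \<ge> 0" by (simp add: intg_def)
      moreover have "vr (of_nat (p choose k)) \<ge> 1" using k by (intro vr_choose) auto
      ultimately show "vr (of_nat (p choose k) * (f ^ k * g ^ (p - k)) $ n) \<ge> ereal 1"
        using vr_mult1 by (simp add: one_ereal_def)
    qed simp
    ultimately show "vr ((\<Sum>k\<in>{1..<p}. T k) $ n) \<ge> 1" by (simp add: one_ereal_def)
  qed
qed

lemma monom_frob: assumes c: "vr c \<ge> 0"
  shows "pcong ((fps_const c * fps_X ^ k) ^ p) ((fps_const c * fps_X ^ k) oo fps_X ^ p)"
proof -
  have p1: "p > 1" using pp prime_gt_1_nat by blast
  have X0: "(fps_X ^ p :: rat fps) $ 0 = 0" using p1 by simp
  have l: "(fps_const c * fps_X ^ k) ^ p = fps_const (c ^ p) * fps_X ^ (p * k)"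
    by (simp add: power_mult_distrib fps_const_power power_mult[symmetric] mult.commute)
  have r: "(fps_const c * fps_X ^ k) oo fps_X ^ p = fps_const c * fps_X ^ (p * k)"
    by (simp add: fps_compose_mult_distrib[OF X0] fps_X_power_compose[OF X0] power_mult)
  show ?thesis unfolding l r pcong_def
  proof
    fix n
    have "(fps_const (c ^ p) * fps_X ^ (p * k) - fps_const c * fps_X ^ (p * k)) $ n
        = (if n = p * k then c ^ p - c else 0)" by (simp add: fps_X_power_mult_right_nth[where f="fps_const _", simplified] algebra_simps)
    moreover have "vr (c ^ p - c) \<ge> 1" using vrat_fermat[OF c] .
    ultimately show "vr ((fps_const (c ^ p) * fps_X ^ (p * k) - fps_const c * fps_X ^ (p * k)) $ n) \<ge> 1"
      by auto
  qed
qed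

lemma intg_trunc: assumes "\<And>j. j < N \<Longrightarrow> vr (f $ j) \<ge> 0" shows "intg (trunc N f)"
  unfolding intg_def trunc_nth using assms by auto

lemma frob: assumes "\<And>j. j < N \<Longrightarrow> vr (f $ j) \<ge> 0"
  shows "pcong (trunc N f ^ p) (trunc N f oo fps_X ^ p)"
  using assms
proof (induction N)
  case 0
  have p0: "p > 0" using pp prime_gt_0_nat by blast
  have "trunc 0 f = 0" by (rule fps_ext) (simp add: trunc_nth)
  thus ?case using p0 by (simp add: pcong_refl zero_power)
next
  case (Suc N)
  define T where "T = trunc N f"
  define B where "B = fps_const (f $ N) * fps_X ^ N"
  have c: "vr (f $ N) \<ge> 0" using Suc.prems by simp
  have iT: "intg T" unfolding T_def by (rule intg_trunc) (use Suc.prems in simp)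
  have iB: "intg B" unfolding B_def by (intro intg_mult intg_const intg_Xpow c)
  have IH: "pcong (T ^ p) (T oo fps_X ^ p)" unfolding T_def by (rule Suc.IH) (use Suc.prems in simp)
  have "pcong ((T + B) ^ p) (T ^ p + B ^ p)" by (rule freshman[OF iT iB])
  moreover have "pcong (T ^ p + B ^ p) ((T oo fps_X ^ p) + (B oo fps_X ^ p))"
    by (rule pcong_add[OF IH]) (unfold B_def, rule monom_frob[OF c])
  ultimately have "pcong ((T + B) ^ p) ((T oo fps_X ^ p) + (B oo fps_X ^ p))" by (rule pcong_trans)
  thus ?case unfolding trunc_Suc T_def[symmetric] B_def[symmetric] by (simp add: fps_compose_add_distrib)
qed

end

context pval begin

lemma vr_exp: assumes r: "r \<ge> 1" shows "vr (fps_exp (- of_nat p) $ r) \<ge> 1"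
proof -
  define x :: 'a where "x = (- of_nat p) ^ r"
  define y :: 'a where "y = of_nat (fact r :: nat)"
  define m where "m = multiplicity p (fact r :: nat)"
  have ofr: "of_rat (fact r :: rat) = (fact r :: 'a)" by (metis of_nat_fact of_rat_of_nat_eq)
  have eq: "(of_rat (fps_exp (- of_nat p) $ r) :: 'a) = x / y"
    by (simp add: x_def y_def of_rat_divide of_rat_power of_rat_minus ofr)
  have y0: "y \<noteq> 0" unfolding y_def by simp
  have vy: "v y = ereal (real m)" unfolding y_def m_def by (rule vnat_mult) simp
  have ml: "m \<le> r - 1" unfolding m_def by (rule mult_fact_le[OF pp r])
  have vx: "v x \<ge> ereal (real r * 1)" unfolding x_def by (rule vge_power) (simp add: vp)
  have "v (x / y) + v y = v x" using y0 by (metis vmult nonzero_divide_eq_eq)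
  hence e: "v (x / y) + ereal (real m) \<ge> ereal (real r)" using vx vy by simp
  have "v (x / y) \<ge> 1"
  proof (cases "v (x / y)")
    case (real z)
    hence "z + real m \<ge> real r" using e by simp
    hence "z \<ge> 1" using ml r by linarith
    thus ?thesis using real by simp
  next
    case PInf thus ?thesis by simp
  next
    case MInf thus ?thesis using vnm by simp
  qed
  thus ?thesis using eq by simp
qed

lemma ereal_one_plus: "1 + (x::ereal) \<ge> 1 \<Longrightarrow> x \<noteq> -\<infinity> \<Longrightarrow> x \<ge> 0"
  by (cases x) auto

theorem AH_integral: "vr (artin_hasse_fps p $ n) \<ge> 0"
proof (induction n rule: less_induct)
  case (less n)
  define A where "A = artin_hasse_fps p"
  have A0: "A $ 0 = 1" unfolding A_def by (rule AH_0[OF pp])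
  show ?case
  proof (cases "n = 0")
    case True thus ?thesis using A0 unfolding A_def by simp
  next
    case False
    have p1: "p > 1" using pp prime_gt_1_nat by blast
    define P where "P = trunc n A"
    define e where "e = (fps_exp (- of_nat p) :: rat fps)"
    have low: "\<And>j. j < n \<Longrightarrow> vr (A $ j) \<ge> 0" using less unfolding A_def by blast
    have AP: "\<And>j. j < n \<Longrightarrow> A $ j = P $ j" unfolding P_def trunc_nth by simp
    have P0: "P $ 0 = 1" using False A0 unfolding P_def trunc_nth by simp
    have Pn: "P $ n = 0" unfolding P_def trunc_nth by simp
    have iP: "intg P" unfolding P_def by (rule intg_trunc) (use low in simp)
    have s1: "(A ^ p) $ n - (P ^ p) $ n = of_nat p * A $ n"
      using power_top_diff[of n A P p, OF AP A0 P0] Pn by simp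
    have "pcong (P ^ p) (P oo fps_X ^ p)" unfolding P_def by (rule frob) (use low in simp)
    hence s2: "vr ((P oo fps_X ^ p) $ n - (P ^ p) $ n) \<ge> 1"
      unfolding pcong_def by (metis fps_sub_nth minus_diff_eq vr_uminus)
    have s3: "(P oo fps_X ^ p) $ n = (A oo fps_X ^ p) $ n"
    proof -
      have "n div p < n" using False p1 by simp
      thus ?thesis using p1 by (simp add: compose_Xpow_nth AP)
    qed
    have s4: "A oo fps_X ^ p = A ^ p * e" unfolding A_def e_def by (rule dwork_identity[OF pp])
    have "(A ^ p * e) $ n = (\<Sum>i\<in>insert n {0..<n}. (A ^ p) $ i * e $ (n - i))"
      by (simp add: fps_mult_nth atLeast0AtMost atLeast0LessThan lessThan_Suc_atMost[symmetric] lessThan_Suc)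
    also have "\<dots> = (A ^ p) $ n + (\<Sum>i\<in>{0..<n}. (A ^ p) $ i * e $ (n - i))"
      by (simp add: e_def)
    finally have s5: "(A ^ p * e) $ n - (A ^ p) $ n = (\<Sum>i\<in>{0..<n}. (A ^ p) $ i * e $ (n - i))" by simp
    have s6: "vr (\<Sum>i\<in>{0..<n}. (A ^ p) $ i * e $ (n - i)) \<ge> ereal 1"
    proof (rule vr_sum)
      fix i assume i: "i \<in> {0..<n}"
      have "(A ^ p) $ i = (P ^ p) $ i" using i by (intro power_low_eq[OF AP]) auto
      moreover have "vr ((P ^ p) $ i) \<ge> 0" using intg_power[OF iP] by (simp add: intg_def)
      moreover have "vr (e $ (n - i)) \<ge> 1" unfolding e_def using i by (intro vr_exp) auto
      ultimately show "vr ((A ^ p) $ i * e $ (n - i)) \<ge> ereal 1"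
        using vr_mult1 by (simp add: one_ereal_def mult.commute)
    qed simp
    have eqn: "of_nat p * A $ n = ((P oo fps_X ^ p) $ n - (P ^ p) $ n) - ((A ^ p * e) $ n - (A ^ p) $ n)"
      using s1 s3 s4 by simp
    have "vr (of_nat p * A $ n) \<ge> ereal 1" unfolding eqn
      by (rule vr_diff) (use s2 s5 s6 in \<open>auto simp: one_ereal_def\<close>)
    hence "1 + vr (A $ n) \<ge> 1" by (simp add: vr_p_mult one_ereal_def)
    hence "vr (A $ n) \<ge> 0" using vnm by (intro ereal_one_plus) auto
    thus ?thesis unfolding A_def .
  qed
qed

end

lemma AH_1: assumes pp: "prime p" shows "artin_hasse_fps p $ Suc 0 = 1"
proof -
  have "fps_deriv (artin_hasse_fps p) $ 0 = (artin_hasse_fps p * fps_deriv (AH_log_fps p)) $ 0"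
    by (simp only: AH_deriv[OF pp])
  moreover have "\<exists>i. Suc 0 = p ^ i" by (rule exI[of _ 0]) simp
  hence "fps_deriv (AH_log_fps p) $ 0 = 1"
    using ell_nth[of p 0] by (simp del: fps_deriv_nth)
  ultimately show ?thesis using AH_0[OF pp] by (simp del: fps_deriv_nth) (simp)
qed

lemma p_dvd_choose_pow:
  assumes pp: "prime (p::nat)" and j: "0 < j" "j < p ^ k"
  shows "p dvd (p ^ k choose j)"
proof (rule ccontr)
  assume nd: "\<not> p dvd (p ^ k choose j)"
  have pk: "p ^ k > 0" using pp prime_gt_0_nat by simp
  obtain n i where ni: "p ^ k = Suc n" "j = Suc i" using pk j by (cases "p ^ k"; cases j) auto
  have "Suc i * (Suc n choose Suc i) = Suc n * (n choose i)" by (rule Suc_times_binomial)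
  hence "p ^ k dvd j * (p ^ k choose j)" using ni by (metis dvd_triv_left)
  moreover have "coprime (p ^ k) (p ^ k choose j)"
    using nd pp by (simp add: coprime_power_left_iff prime_imp_coprime)
  ultimately have "p ^ k dvd j" using coprime_dvd_mult_left_iff by blast
  hence "p ^ k \<le> j" using j by (simp add: dvd_imp_le)
  thus False using j by simp
qed

context pval begin

lemma eval_est:
  assumes ev: "fps_val_eval v (artin_hasse_fps p) x w" and vx: "v x = ereal e" and e: "e \<ge> 0"
  shows "v (w - 1 - x) \<ge> ereal (2 * e)"
proof -
  define S where "S N = (\<Sum>n<N. of_rat (artin_hasse_fps p $ n) * x ^ n)" for N
  obtain N0 where N0: "\<And>n. n \<ge> N0 \<Longrightarrow> v (S n - w) \<ge> ereal (2 * e)"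
    using ev unfolding fps_val_eval_def val_sums_def val_tendsto_def S_def by blast
  define n where "n = max N0 2"
  have n2: "n \<ge> 2" unfolding n_def by simp
  have "{..<n} = insert 0 (insert 1 {2..<n})" using n2 by auto
  hence "S n = of_rat (artin_hasse_fps p $ 0) * x ^ 0 + (of_rat (artin_hasse_fps p $ 1) * x ^ 1
           + (\<Sum>k\<in>{2..<n}. of_rat (artin_hasse_fps p $ k) * x ^ k))"
    unfolding S_def by (simp add: sum.insert)
  hence Sn: "S n - 1 - x = (\<Sum>k\<in>{2..<n}. of_rat (artin_hasse_fps p $ k) * x ^ k)"
    by (simp add: AH_0[OF pp] AH_1[OF pp])
  have t: "v (S n - 1 - x) \<ge> ereal (2 * e)" unfolding Sn
  proof (rule vge_sum)
    fix k assume k: "k \<in> {2..<n}"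
    have "v (of_rat (artin_hasse_fps p $ k) * x ^ k) \<ge> ereal (0 + real k * e)"
      by (rule vge_mult) (use AH_integral[of k] vx in \<open>auto simp: zero_ereal_def intro: vge_power\<close>)
    moreover have "real k * e \<ge> 2 * e" using k e by (simp add: mult_right_mono)
    hence "ereal (2 * e) \<le> ereal (0 + real k * e)" by simp
    ultimately show "v (of_rat (artin_hasse_fps p $ k) * x ^ k) \<ge> ereal (2 * e)"
      by (rule order_trans[rotated])
  qed simp
  have eqw: "w - 1 - x = (S n - 1 - x) - (S n - w)" by simp
  have "v (S n - w) \<ge> ereal (2 * e)" using N0 n_def by simp
  from vge_diff[OF t this] show ?thesis unfolding eqw .
qed

lemma binom_est:
  assumes vx: "v x \<ge> ereal e" and e: "e \<ge> 0" and Ne: "real (p ^ k) * e \<le> 1"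
  shows "v ((x + 1) ^ (p ^ k) - 1 - x ^ (p ^ k)) \<ge> ereal ((real (p ^ k) + 1) * e)"
proof -
  define N where "N = p ^ k"
  have N1: "N \<ge> 1" unfolding N_def using pp prime_gt_0_nat by (simp add: Suc_leI)
  define T where "T j = of_nat (N choose j) * x ^ j * 1 ^ (N - j)" for j
  have "(x + 1) ^ N = (\<Sum>j\<le>N. T j)" unfolding T_def by (rule binomial_ring)
  also have "{..N} = insert N (insert 0 {1..<N})" using N1 by auto
  also have "(\<Sum>j\<in>insert N (insert 0 {1..<N}). T j) = T N + (T 0 + (\<Sum>j\<in>{1..<N}. T j))"
    using N1 by (simp add: sum.insert)
  finally have "(x + 1) ^ N - 1 - x ^ N = (\<Sum>j\<in>{1..<N}. T j)" by (simp add: T_def)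
  moreover have "v (\<Sum>j\<in>{1..<N}. T j) \<ge> ereal ((real N + 1) * e)"
  proof (rule vge_sum)
    fix j assume j: "j \<in> {1..<N}"
    have "p dvd (N choose j)" unfolding N_def using j by (intro p_dvd_choose_pow[OF pp]) (auto simp: N_def)
    then obtain c where c: "N choose j = p * c" by (elim dvdE)
    have "v (of_nat (N choose j) :: 'a) \<ge> ereal (1 + 0)" unfolding c of_nat_mult
      by (rule vge_mult) (use vp vnat in \<open>auto simp: zero_ereal_def\<close>)
    moreover have "v (x ^ j) \<ge> ereal (real j * e)" by (rule vge_power[OF vx])
    ultimately have "v (of_nat (N choose j) * x ^ j) \<ge> ereal (1 + 0 + real j * e)" by (rule vge_mult)
    moreover have "1 + 0 + real j * e \<ge> (real N + 1) * e"
    proof -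
      have "real j * e \<ge> e" using j e by (simp add: mult_right_mono[of 1 "real j" e, simplified])
      thus ?thesis using Ne unfolding N_def by (simp add: algebra_simps)
    qed
    hence "ereal ((real N + 1) * e) \<le> ereal (1 + 0 + real j * e)" by simp
    ultimately have "v (of_nat (N choose j) * x ^ j) \<ge> ereal ((real N + 1) * e)"
      by (rule order_trans[rotated])
    thus "v (T j) \<ge> ereal ((real N + 1) * e)" by (simp add: T_def)
  qed simp
  ultimately show ?thesis unfolding N_def by simp
qed

lemma powdiff_est:
  assumes d: "v (x - y) \<ge> ereal (2 * e)" and vx: "v x \<ge> ereal e" and vy: "v y \<ge> ereal e"
    and e: "e \<ge> 0" and N: "N \<ge> 1"
  shows "v (x ^ N - y ^ N) \<ge> ereal ((real N + 1) * e)"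
proof -
  have "x ^ N - y ^ N = (x - y) * (\<Sum>i<N. y ^ (N - Suc i) * x ^ i)" by (rule power_diff_sumr2)
  moreover have "v (\<Sum>i<N. y ^ (N - Suc i) * x ^ i) \<ge> ereal ((real N - 1) * e)"
  proof (rule vge_sum)
    fix i assume i: "i \<in> {..<N}"
    have "v (y ^ (N - Suc i) * x ^ i) \<ge> ereal (real (N - Suc i) * e + real i * e)"
      by (intro vge_mult vge_power vx vy)
    moreover have "real (N - Suc i) * e + real i * e = (real N - 1) * e" using i by (simp add: of_nat_diff algebra_simps)
    ultimately show "v (y ^ (N - Suc i) * x ^ i) \<ge> ereal ((real N - 1) * e)" by simp
  qed simp
  ultimately have "v (x ^ N - y ^ N) \<ge> ereal (2 * e + (real N - 1) * e)" using vge_mult[OF d] by simp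
  thus ?thesis by (simp add: algebra_simps)
qed

end

theorem lemma3p2:
  fixes p m :: nat and ord :: "'a::field_char_0 \<Rightarrow> ereal"
    and \<zeta> :: 'a and \<pi> :: "nat \<Rightarrow> 'a"
  assumes "prime p" and "m \<ge> 1"
    and "alg_closed_field TYPE('a)"
    and "is_valuation ord" and "ord (of_nat p) = 1"
    and "primitive_root_of_unity (p ^ m) \<zeta>"
    and root: "\<And>l. 1 \<le> l \<Longrightarrow> l \<le> m \<Longrightarrow> fps_val_eval ord (AH_log_fps p) (\<pi> l) 0"
    and ordpi: "\<And>l. 1 \<le> l \<Longrightarrow> l \<le> m \<Longrightarrow>
                  ord (\<pi> l) = ereal (1 / (real p ^ (l - 1) * (real p - 1)))"
    and E: "\<And>l. 1 \<le> l \<Longrightarrow> l \<le> m \<Longrightarrow>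
                  fps_val_eval ord (artin_hasse_fps p) (\<pi> l) (\<zeta> ^ (p ^ (m - l)))"
    and "1 \<le> l" and "l \<le> m"
  shows "ord (\<pi> l - \<pi> m ^ (p ^ (m - l))) \<ge> ereal (real (p ^ (m - l) + 1)) * ord (\<pi> m)"
proof -
  interpret pval ord p by unfold_locales (use assms(1,4,5) in auto)
  have l1: "1 \<le> l" and lm: "l \<le> m" by fact+
  define N where "N = p ^ (m - l)"
  define e where "e = 1 / (real p ^ (m - 1) * (real p - 1))"
  define el where "el = 1 / (real p ^ (l - 1) * (real p - 1))"
  have p2: "real p \<ge> 2" using assms(1) prime_ge_2_nat by auto
  have N1: "N \<ge> 1" unfolding N_def using assms(1) prime_gt_0_nat by (simp add: Suc_leI)
  have e0: "e > 0" unfolding e_def using p2 by simp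
  have dl: "real p ^ (l - 1) * (real p - 1) \<ge> 1"
  proof -
    have "real p ^ (l - 1) \<ge> 1" using p2 by (simp add: one_le_power)
    moreover have "real p - 1 \<ge> 1" using p2 by simp
    ultimately show ?thesis by (metis mult_mono mult_1 order_trans zero_le_one)
  qed
  have el1: "el \<le> 1" unfolding el_def using dl by simp
  have Ne: "real N * e = el"
  proof -
    have "m - 1 = (m - l) + (l - 1)" using l1 lm by simp
    hence "real p ^ (m - 1) = real p ^ (m - l) * real p ^ (l - 1)" by (simp add: power_add)
    thus ?thesis unfolding N_def e_def el_def using p2 by (simp add: field_simps)
  qed
  have vm: "ord (\<pi> m) = ereal e" unfolding e_def using ordpi[of m] assms(2) by simp
  have vl: "ord (\<pi> l) = ereal el" unfolding el_def using ordpi[of l] l1 lm by simp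
  have el0: "el \<ge> 0" unfolding el_def using p2 by simp
  have Em: "fps_val_eval ord (artin_hasse_fps p) (\<pi> m) \<zeta>" using E[of m] assms(2) by simp
  have El: "fps_val_eval ord (artin_hasse_fps p) (\<pi> l) (\<zeta> ^ N)" using E[of l] l1 lm unfolding N_def by simp
  have h1: "ord (\<zeta> - 1 - \<pi> m) \<ge> ereal (2 * e)" by (rule eval_est[OF Em vm]) (use e0 in simp)
  have h2: "ord (\<zeta> ^ N - 1 - \<pi> l) \<ge> ereal (2 * el)" by (rule eval_est[OF El vl el0])
  define x where "x = \<zeta> - 1"
  have vx: "ord x \<ge> ereal e"
  proof -
    have "x = (\<zeta> - 1 - \<pi> m) + \<pi> m" unfolding x_def by simp
    moreover have "ord (\<zeta> - 1 - \<pi> m) \<ge> ereal e" using h1 e0 by (metis order_trans ereal_less_eq(3) mult_2 le_add_same_cancel1 less_imp_le)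
    moreover have "ord (\<pi> m) \<ge> ereal e" using vm by simp
    ultimately show ?thesis using vge_add by metis
  qed
  have h3: "ord ((x + 1) ^ N - 1 - x ^ N) \<ge> ereal ((real N + 1) * e)"
    unfolding N_def by (rule binom_est[OF vx]) (use e0 Ne el1 in \<open>auto simp: N_def\<close>)
  have h4: "ord (x ^ N - \<pi> m ^ N) \<ge> ereal ((real N + 1) * e)"
    by (rule powdiff_est) (use h1 vx vm e0 N1 in \<open>auto simp: x_def\<close>)
  have h2': "ord (\<zeta> ^ N - 1 - \<pi> l) \<ge> ereal ((real N + 1) * e)"
  proof -
    have "real N \<ge> 1" using N1 by simp
    hence "e * 1 \<le> e * real N" using e0 by (intro mult_left_mono) auto
    hence "(real N + 1) * e \<le> 2 * el" using Ne by (simp add: algebra_simps)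
    thus ?thesis using h2 by (metis order_trans ereal_less_eq(3))
  qed
  have id: "\<pi> l - \<pi> m ^ N = (((x + 1) ^ N - 1 - x ^ N) - (\<zeta> ^ N - 1 - \<pi> l)) + (x ^ N - \<pi> m ^ N)"
    unfolding x_def by simp
  have "ord (\<pi> l - \<pi> m ^ N) \<ge> ereal ((real N + 1) * e)"
    unfolding id by (intro vge_add vge_diff h2' h3 h4)
  thus ?thesis unfolding vm N_def by (simp add: add.commute)
qed

end
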